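(* Let $\delta>0$ and let $b>0$ be an integer. Suppose that $M$ is a $(\delta,b)$-map of perimeter $n$ and that every vertex of $M$ is at distance at most $r$ from a boundary vertex, or from a non-flat interior vertex, or from a vertex of a non-flat face of $M$. Then $\mathrm{Area}(M)\le Ln$, where $L$ depends only on $\delta,b,r$ and is exponential in $r$.
   Context: A map is a finite, connected, simply connected 2-complex embedded in the plane; $\mathrm{Area}(M)$ is its number of faces, its perimeter is the length of its closed boundary path, and distances are combinatorial distances in the 1-skeleton. Degrees of vertices (number of oriented edges starting there, loops counted twice) and of faces (length of the boundary path) are as usual. A corner of a face $\Pi$ at a vertex $o$ is a pair of consecutive edges $e,f$ of the boundary path of $\Pi$ with $e_+=f_-=o$. An angle function assigns a non-negative real number (angle) to each corner of each face. For a face $\Pi$ of degree $d$, let $\Sigma_\Pi$ be the sum of its corner angles; its curvature is $\Sigma_\Pi-\pi(d-2)$. For a vertex $o$, let $\Sigma_o$ be the sum of angles of all corners at $o$ and $\mu(o)$ the number of times the boundary path of $M$ passes through $o$; its curvature is $(2-\mu(o))\pi-\Sigma_o$. A face or interior vertex is flat if its curvature is $0$, non-flat otherwise. A $(\delta,b)$-map is a map with an angle function such that every non-flat face and every non-flat interior vertex has curvature at most $-\delta$, and every vertex and every face has degree at most $b$. *)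

theory Defs
  imports Complex_Main
begin

text \<open>
  A map (finite connected simply connected 2-complex in the plane) is encoded as a
  connected combinatorial map of genus 0 (an oriented planar map), with one face
  distinguished as the outer (unbounded) face.  Darts (oriented edges) are natural
  numbers; alpha reverses a dart, sigma is the rotation around the source vertex,
  and phi = sigma o alpha walks along face boundaries.  The record also carries the angle
  function: the corner of a face between the consecutive boundary edges d and
  phi d (located at the head of d) is identified with the dart d and gets angle
  cm_angle d.
\<close>

record cmap =
  cm_darts :: "nat set"
  cm_alpha :: "nat \<Rightarrow> nat"
  cm_sigma :: "nat \<Rightarrow> nat"
  cm_outer :: "nat set"
  cm_angle :: "nat \<Rightarrow> real"

definition orb :: "('a \<Rightarrow> 'a) \<Rightarrow> 'a \<Rightarrow> 'a set" where
  "orb f x = {(f ^^ n) x | n. True}"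

definition cm_phi :: "cmap \<Rightarrow> nat \<Rightarrow> nat" where
  "cm_phi M = cm_sigma M \<circ> cm_alpha M"

definition src :: "cmap \<Rightarrow> nat \<Rightarrow> nat set" where
  "src M d = orb (cm_sigma M) d"

definition tgt :: "cmap \<Rightarrow> nat \<Rightarrow> nat set" where
  "tgt M d = src M (cm_alpha M d)"

definition vertices :: "cmap \<Rightarrow> nat set set" where
  "vertices M = {src M d | d. d \<in> cm_darts M}"

definition edges :: "cmap \<Rightarrow> nat set set" where
  "edges M = {{d, cm_alpha M d} | d. d \<in> cm_darts M}"

definition all_faces :: "cmap \<Rightarrow> nat set set" where
  "all_faces M = {orb (cm_phi M) d | d. d \<in> cm_darts M}"

definition faces :: "cmap \<Rightarrow> nat set set" where
  "faces M = all_faces M - {cm_outer M}"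

definition cm_connected :: "cmap \<Rightarrow> bool" where
  "cm_connected M \<longleftrightarrow>
     (\<forall>d\<in>cm_darts M. \<forall>d'\<in>cm_darts M.
        (d, d') \<in> {(x, y). x \<in> cm_darts M \<and> (y = cm_alpha M x \<or> y = cm_sigma M x)}\<^sup>*)"

definition is_map :: "cmap \<Rightarrow> bool" where
  "is_map M \<longleftrightarrow>
     finite (cm_darts M) \<and>
     bij_betw (cm_alpha M) (cm_darts M) (cm_darts M) \<and>
     (\<forall>d\<in>cm_darts M. cm_alpha M (cm_alpha M d) = d \<and> cm_alpha M d \<noteq> d) \<and>
     bij_betw (cm_sigma M) (cm_darts M) (cm_darts M) \<and>
     cm_connected M \<and>
     card (vertices M) + card (all_faces M) = card (edges M) + 2 \<and>
     cm_outer M \<in> all_faces M \<and>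
     (\<forall>F\<in>faces M. \<forall>d\<in>F. cm_angle M d \<ge> 0)"

definition area :: "cmap \<Rightarrow> nat" where
  "area M = card (faces M)"

text \<open>perimeter = length of the boundary path = length of the outer face\<close>
definition perimeter :: "cmap \<Rightarrow> nat" where
  "perimeter M = card (cm_outer M)"

definition vdeg :: "cmap \<Rightarrow> nat set \<Rightarrow> nat" where
  "vdeg M v = card {d \<in> cm_darts M. src M d = v}"

definition fdeg :: "nat set \<Rightarrow> nat" where
  "fdeg F = card F"

text \<open>number of times the boundary path passes through v\<close>
definition mu :: "cmap \<Rightarrow> nat set \<Rightarrow> nat" where
  "mu M v = card {d \<in> cm_outer M. tgt M d = v}"

definition interior_vertex :: "cmap \<Rightarrow> nat set \<Rightarrow> bool" where
  "interior_vertex M v \<longleftrightarrow> v \<in> vertices M \<and> mu M v = 0"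

definition boundary_vertex :: "cmap \<Rightarrow> nat set \<Rightarrow> bool" where
  "boundary_vertex M v \<longleftrightarrow> v \<in> vertices M \<and> mu M v > 0"

definition face_curv :: "cmap \<Rightarrow> nat set \<Rightarrow> real" where
  "face_curv M F = (\<Sum>d\<in>F. cm_angle M d) - pi * (real (fdeg F) - 2)"

definition vertex_angle_sum :: "cmap \<Rightarrow> nat set \<Rightarrow> real" where
  "vertex_angle_sum M v =
     (\<Sum>d\<in>{d. d \<in> \<Union>(faces M) \<and> tgt M d = v}. cm_angle M d)"

definition vertex_curv :: "cmap \<Rightarrow> nat set \<Rightarrow> real" where
  "vertex_curv M v = (2 - real (mu M v)) * pi - vertex_angle_sum M v"

definition delta_b_map :: "real \<Rightarrow> nat \<Rightarrow> cmap \<Rightarrow> bool" where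
  "delta_b_map \<delta> b M \<longleftrightarrow>
     is_map M \<and>
     (\<forall>F\<in>faces M. face_curv M F \<noteq> 0 \<longrightarrow> face_curv M F \<le> - \<delta>) \<and>
     (\<forall>v. interior_vertex M v \<longrightarrow> vertex_curv M v \<noteq> 0 \<longrightarrow> vertex_curv M v \<le> - \<delta>) \<and>
     (\<forall>v\<in>vertices M. vdeg M v \<le> b) \<and>
     (\<forall>F\<in>faces M. fdeg F \<le> b)"

definition adj :: "cmap \<Rightarrow> (nat set \<times> nat set) set" where
  "adj M = {(src M d, tgt M d) | d. d \<in> cm_darts M}"

definition dist_le :: "cmap \<Rightarrow> nat \<Rightarrow> nat set \<Rightarrow> nat set \<Rightarrow> bool" where
  "dist_le M r v w \<longleftrightarrow> (\<exists>k\<le>r. (v, w) \<in> adj M ^^ k)"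

definition special_vertex :: "cmap \<Rightarrow> nat set \<Rightarrow> bool" where
  "special_vertex M w \<longleftrightarrow>
     boundary_vertex M w \<or>
     (interior_vertex M w \<and> vertex_curv M w \<noteq> 0) \<or>
     (\<exists>F\<in>faces M. face_curv M F \<noteq> 0 \<and> (\<exists>d\<in>F. src M d = w))"

end

theory Submission
  imports Defs
begin


lemma funpow_in: "f ` D \<subseteq> D \<Longrightarrow> x \<in> D \<Longrightarrow> (f ^^ n) x \<in> D"
  by (induction n) auto

lemma inj_funpow: "inj_on f D \<Longrightarrow> f ` D \<subseteq> D \<Longrightarrow> inj_on (f ^^ n) D"
proof (induction n)
  case 0 then show ?case by simp
next
  case (Suc n)
  have "(f ^^ n) ` D \<subseteq> D" using funpow_in[OF Suc.prems(2)] by auto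
  then have "inj_on (f \<circ> (f ^^ n)) D"
    using comp_inj_on[OF Suc.IH[OF Suc.prems] inj_on_subset[OF Suc.prems(1)]] by blast
  then show ?case by (simp add: comp_def)
qed

lemma period:
  assumes "finite D" "bij_betw f D D" "x \<in> D"
  shows "\<exists>p>0. (f ^^ p) x = x"
proof -
  have fD: "f ` D \<subseteq> D" and inj: "inj_on f D" using assms(2) bij_betw_imp_inj_on[OF assms(2)] bij_betw_imp_surj_on[OF assms(2)] by auto
  let ?g = "\<lambda>n. (f ^^ n) x"
  have "?g ` {..card D} \<subseteq> D" using funpow_in[OF fD assms(3)] by auto
  then have cle: "card (?g ` {..card D}) \<le> card D" using assms(1) card_mono by blast
  have "\<not> inj_on ?g {..card D}"
  proof
    assume "inj_on ?g {..card D}"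
    then have "card (?g ` {..card D}) = Suc (card D)" by (simp add: card_image)
    then show False using cle by simp
  qed
  then obtain i0 j0 where ij0: "i0 \<noteq> j0" "?g i0 = ?g j0"
    unfolding inj_on_def by blast
  have "\<exists>i j. i < j \<and> ?g i = ?g j"
  proof (cases "i0 < j0")
    case True then show ?thesis using ij0 by blast
  next
    case False then have "j0 < i0" using ij0(1) by simp
    then show ?thesis using ij0 by metis
  qed
  then obtain i j where ij: "i < j" "?g i = ?g j" by blast
  have jj: "j = i + (j - i)" using ij(1) by simp
  have "(f ^^ j) x = (f ^^ i) ((f ^^ (j - i)) x)"
    by (subst jj) (simp only: funpow_add o_apply)
  then have "(f ^^ i) ((f ^^ (j - i)) x) = (f ^^ i) x" using ij by simp
  moreover have "(f ^^ (j - i)) x \<in> D" using funpow_in[OF fD assms(3)] .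
  ultimately have "(f ^^ (j - i)) x = x"
    using inj_funpow[OF inj fD, of i] assms(3) unfolding inj_on_def by blast
  then show ?thesis using ij(1) by (intro exI[of _ "j - i"]) auto
qed

lemma orb_self: "x \<in> orb f x"
  unfolding orb_def by (auto intro: exI[of _ 0])

lemma orb_sub: "f ` D \<subseteq> D \<Longrightarrow> x \<in> D \<Longrightarrow> orb f x \<subseteq> D"
  unfolding orb_def using funpow_in[of f D x] by auto

lemma orb_eq:
  assumes "finite D" "bij_betw f D D" "x \<in> D" "y \<in> orb f x"
  shows "orb f y = orb f x"
proof -
  obtain n where y: "y = (f ^^ n) x" using assms(4) unfolding orb_def by auto
  obtain p where p: "p > 0" "(f ^^ p) x = x" using period[OF assms(1-3)] by auto
  have pm: "(f ^^ (p * m)) x = x" for m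
  proof (induction m)
    case 0 then show ?case by simp
  next
    case (Suc m)
    have "(f ^^ (p * Suc m)) x = (f ^^ p) ((f ^^ (p * m)) x)"
      by (simp add: funpow_add)
    then show ?case using Suc p by simp
  qed
  have "p * (n+1) \<ge> n + 1" using p(1) mult_le_mono1[of 1 p "n+1"] by simp
  then have "(f ^^ (p * (n+1) - n)) y = (f ^^ (p*(n+1))) x"
    unfolding y by (metis funpow_add le_add_diff_inverse2 add_leD1 o_apply)
  then have "(f ^^ (p * (n+1) - n)) y = x" using pm[of "n+1"] by simp
  then have xy: "x \<in> orb f y" unfolding orb_def by (metis (mono_tags, lifting) mem_Collect_eq)
  have sub: "orb f b \<subseteq> orb f a" if bab: "b \<in> orb f a" for a b
  proof
    fix z assume "z \<in> orb f b"
    then obtain k where "z = (f ^^ k) b" unfolding orb_def by auto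
    moreover obtain l where "b = (f ^^ l) a" using bab unfolding orb_def by auto
    ultimately have "z = (f ^^ (k + l)) a" by (simp add: funpow_add)
    then show "z \<in> orb f a" unfolding orb_def by auto
  qed
  show ?thesis using sub[OF xy] sub[OF assms(4)] by auto
qed

lemma orb_disj:
  assumes "finite D" "bij_betw f D D" "x \<in> D" "y \<in> D" "orb f x \<noteq> orb f y"
  shows "orb f x \<inter> orb f y = {}"
proof (rule ccontr)
  assume "orb f x \<inter> orb f y \<noteq> {}"
  then obtain z where "z \<in> orb f x" "z \<in> orb f y" by auto
  then show False using orb_eq[OF assms(1,2,3)] orb_eq[OF assms(1,2,4)] assms(5) by metis
qed



lemma map_basic:
  assumes "is_map M"
  shows "finite (cm_darts M)" "bij_betw (cm_phi M) (cm_darts M) (cm_darts M)"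
    "\<And>d. d \<in> cm_darts M \<Longrightarrow> cm_alpha M d \<in> cm_darts M"
    "inj_on (cm_alpha M) (cm_darts M)"
    "all_faces M = orb (cm_phi M) ` cm_darts M"
    "finite (all_faces M)" "finite (vertices M)" "vertices M = src M ` cm_darts M"
    "finite (edges M)"
    "\<And>F. F \<in> all_faces M \<Longrightarrow> F \<subseteq> cm_darts M \<and> finite F"
    "\<Union>(all_faces M) = cm_darts M"
    "\<And>F G. F \<in> all_faces M \<Longrightarrow> G \<in> all_faces M \<Longrightarrow> F \<noteq> G \<Longrightarrow> F \<inter> G = {}"
    "cm_outer M \<in> all_faces M"
    "\<And>d. d \<in> cm_darts M \<Longrightarrow> tgt M d \<in> vertices M"
proof -
  have fin: "finite (cm_darts M)" using assms unfolding is_map_def by auto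
  have ba: "bij_betw (cm_alpha M) (cm_darts M) (cm_darts M)"
   and bs: "bij_betw (cm_sigma M) (cm_darts M) (cm_darts M)"
    using assms unfolding is_map_def by auto
  have bp: "bij_betw (cm_phi M) (cm_darts M) (cm_darts M)"
    unfolding cm_phi_def using bij_betw_trans[OF ba bs] .
  have pD: "cm_phi M ` cm_darts M \<subseteq> cm_darts M" using bij_betw_imp_surj_on[OF bp] by simp
  have AF: "all_faces M = orb (cm_phi M) ` cm_darts M" unfolding all_faces_def by auto
  have V: "vertices M = src M ` cm_darts M" unfolding vertices_def by auto
  have E: "edges M = (\<lambda>d. {d, cm_alpha M d}) ` cm_darts M" unfolding edges_def by auto
  have aD: "\<And>d. d \<in> cm_darts M \<Longrightarrow> cm_alpha M d \<in> cm_darts M"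
    using bij_betw_imp_surj_on[OF ba] by auto
  show "finite (cm_darts M)" by (rule fin)
  show "bij_betw (cm_phi M) (cm_darts M) (cm_darts M)" by (rule bp)
  show "\<And>d. d \<in> cm_darts M \<Longrightarrow> cm_alpha M d \<in> cm_darts M" by (rule aD)
  show "inj_on (cm_alpha M) (cm_darts M)" using bij_betw_imp_inj_on[OF ba] .
  show "all_faces M = orb (cm_phi M) ` cm_darts M" by (rule AF)
  show "finite (all_faces M)" using AF fin by simp
  show "finite (vertices M)" using V fin by simp
  show "vertices M = src M ` cm_darts M" by (rule V)
  show "finite (edges M)" using E fin by simp
  show "\<And>F. F \<in> all_faces M \<Longrightarrow> F \<subseteq> cm_darts M \<and> finite F"
  proof -
    fix F assume "F \<in> all_faces M"
    then obtain d where d: "d \<in> cm_darts M" "F = orb (cm_phi M) d" unfolding AF by blast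
    then have "F \<subseteq> cm_darts M" using orb_sub[OF pD d(1)] by simp
    then show "F \<subseteq> cm_darts M \<and> finite F" using fin finite_subset by blast
  qed
  show "\<Union>(all_faces M) = cm_darts M"
  proof
    show "\<Union>(all_faces M) \<subseteq> cm_darts M"
    proof
      fix x assume "x \<in> \<Union>(all_faces M)"
      then obtain d where d: "d \<in> cm_darts M" "x \<in> orb (cm_phi M) d" unfolding AF by blast
      then show "x \<in> cm_darts M" using orb_sub[OF pD d(1)] by blast
    qed
    show "cm_darts M \<subseteq> \<Union>(all_faces M)"
    proof
      fix x assume "x \<in> cm_darts M"
      then have "orb (cm_phi M) x \<in> all_faces M" unfolding AF by blast
      then show "x \<in> \<Union>(all_faces M)" using orb_self[of x "cm_phi M"] by blast
    qed
  qed
  show "\<And>F G. F \<in> all_faces M \<Longrightarrow> G \<in> all_faces M \<Longrightarrow> F \<noteq> G \<Longrightarrow> F \<inter> G = {}"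
  proof -
    fix F G assume "F \<in> all_faces M" "G \<in> all_faces M" "F \<noteq> G"
    then obtain d e where "d \<in> cm_darts M" "e \<in> cm_darts M" "F = orb (cm_phi M) d" "G = orb (cm_phi M) e"
      unfolding AF by blast
    then show "F \<inter> G = {}" using orb_disj[OF fin bp, of d e] \<open>F \<noteq> G\<close> by blast
  qed
  show "cm_outer M \<in> all_faces M" using assms unfolding is_map_def by auto
  show "\<And>d. d \<in> cm_darts M \<Longrightarrow> tgt M d \<in> vertices M"
    unfolding tgt_def V using aD by auto
qed

lemma pred_card:
  assumes "is_map M" "\<forall>v\<in>vertices M. vdeg M v \<le> b"
  shows "card {u. (u, w) \<in> adj M} \<le> b"
proof -
  note mb = map_basic[OF assms(1)]
  let ?T = "{d \<in> cm_darts M. tgt M d = w}"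
  let ?S = "{d \<in> cm_darts M. src M d = w}"
  have "{u. (u, w) \<in> adj M} = src M ` ?T" unfolding adj_def by auto
  then have "card {u. (u, w) \<in> adj M} \<le> card ?T" using mb(1) by (simp add: card_image_le)
  also have "card ?T = card (cm_alpha M ` ?T)"
    using mb(4) by (intro card_image[symmetric]) (auto intro: inj_on_subset)
  also have "\<dots> \<le> card ?S"
    using mb(1,3) by (intro card_mono) (auto simp: tgt_def)
  also have "\<dots> \<le> b"
  proof (cases "?S = {}")
    case True then show ?thesis by (simp only: card.empty)
  next
    case False
    then have "w \<in> vertices M" unfolding vertices_def by auto
    then show ?thesis using assms(2) unfolding vdeg_def by auto
  qed
  finally show ?thesis .
qed

lemma ball_card:
  assumes "is_map M" "\<forall>v\<in>vertices M. vdeg M v \<le> b"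
  shows "card {v. (v, w) \<in> adj M ^^ k} \<le> b ^ k"
proof (induction k arbitrary: w)
  case 0 then show ?case by simp
next
  case (Suc k)
  note mb = map_basic[OF assms(1)]
  have eq: "{v. (v, w) \<in> adj M ^^ Suc k} = (\<Union>u\<in>{u. (u, w) \<in> adj M}. {v. (v, u) \<in> adj M ^^ k})"
    by auto
  have fin: "finite {u. (u, w) \<in> adj M}"
    by (rule finite_subset[of _ "src M ` cm_darts M"]) (auto simp: adj_def mb(1))
  have "card {v. (v, w) \<in> adj M ^^ Suc k} \<le> (\<Sum>u\<in>{u. (u, w) \<in> adj M}. card {v. (v, u) \<in> adj M ^^ k})"
    unfolding eq using fin by (rule card_UN_le)
  also have "\<dots> \<le> (\<Sum>u\<in>{u. (u, w) \<in> adj M}. b ^ k)"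
    by (intro sum_mono Suc.IH)
  also have "\<dots> = card {u. (u, w) \<in> adj M} * b ^ k" by simp
  also have "\<dots> \<le> b * b ^ k"
    using pred_card[OF assms] by (intro mult_le_mono1)
  finally show ?case by simp
qed



lemma aux_gb: "(a::real) - p * i + 2 * p * f + (2 * p * v - p * q - a) = p * (2 * v + 2 * f - i - q)"
  by (simp add: algebra_simps)

lemma gb_total:
  assumes "is_map M"
  shows "(\<Sum>F\<in>faces M. face_curv M F) + (\<Sum>v\<in>vertices M. vertex_curv M v) \<ge> 0"
proof -
  note mb = map_basic[OF assms]
  define D where "D = cm_darts M"
  define Ou where "Ou = cm_outer M"
  define ID where "ID = \<Union>(faces M)"
  define ang where "ang = cm_angle M"
  have finF: "finite (faces M)" using mb(6) unfolding faces_def by simp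
  have Ffin: "\<And>F. F \<in> faces M \<Longrightarrow> finite F" using mb(10) unfolding faces_def by blast
  have disj: "\<forall>A\<in>faces M. \<forall>B\<in>faces M. A \<noteq> B \<longrightarrow> A \<inter> B = {}"
    unfolding faces_def using mb(12) by (meson DiffD1)
  have OD: "Ou \<subseteq> D" using mb(10)[OF mb(13)] unfolding Ou_def D_def by (rule conjunct1)
  have AFi: "all_faces M = insert (cm_outer M) (faces M)" using mb(13) unfolding faces_def by auto
  have "\<Union>(all_faces M) = ID \<union> Ou" unfolding AFi ID_def Ou_def by blast
  then have IDO1: "ID \<union> Ou = D" using mb(11) unfolding D_def by simp
  have FO: "F \<inter> Ou = {}" if "F \<in> faces M" for F
    using mb(12)[of F "cm_outer M"] mb(13) that unfolding faces_def Ou_def by auto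
  have IDO2: "ID \<inter> Ou = {}" unfolding ID_def using FO by blast
  note IDO = IDO1 IDO2
  have finD: "finite D" using mb(1) D_def by simp
  have finID: "finite ID" using IDO finD by (metis finite_Un)
  have cardD: "card ID + card Ou = card D"
    using IDO finD card_Un_disjoint[of ID Ou] by (metis finite_Un)
  have cF: "(\<Sum>F\<in>faces M. card F) = card ID"
    unfolding ID_def using disj Ffin by (intro card_Union_disjoint[symmetric]) (auto simp: pairwise_def disjnt_def)
  have aF: "(\<Sum>F\<in>faces M. \<Sum>d\<in>F. ang d) = (\<Sum>d\<in>ID. ang d)"
    unfolding ID_def using sum.Union_disjoint[of "faces M" ang] disj Ffin by simp
  have tV: "tgt M ` ID \<subseteq> vertices M" "tgt M ` Ou \<subseteq> vertices M"
    using mb(14) IDO unfolding D_def by blast+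
  have aV: "(\<Sum>v\<in>vertices M. vertex_angle_sum M v) = (\<Sum>d\<in>ID. ang d)"
    unfolding vertex_angle_sum_def ID_def[symmetric] ang_def
    using sum.group[OF finID mb(7) tV(1), of "cm_angle M"] by simp
  have finO: "finite Ou" using OD finD finite_subset by blast
  have mV: "(\<Sum>v\<in>vertices M. mu M v) = card Ou"
    unfolding mu_def Ou_def[symmetric]
    using sum.group[OF finO mb(7) tV(2), of "\<lambda>_. 1::nat"] by simp
  have cfaces: "card (faces M) + 1 = card (all_faces M)"
    proof -
    have "card (all_faces M - {cm_outer M}) = card (all_faces M) - 1" using mb(6,13) by (simp add: card_Diff_singleton)
    moreover have "card (all_faces M) > 0" using mb(6,13) card_gt_0_iff by blast
    ultimately show ?thesis unfolding faces_def by linarith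
  qed
  have euler: "card (vertices M) + card (all_faces M) = card (edges M) + 2"
    using assms unfolding is_map_def by auto
  have E2: "card D \<le> 2 * card (edges M)"
  proof -
    have "D = \<Union>(edges M)" unfolding D_def edges_def using mb(3) by auto
    then have "card D \<le> sum card (edges M)" using card_Union_le_sum_card by metis
    also have "\<dots> \<le> sum (\<lambda>_. 2) (edges M)"
      by (intro sum_mono) (auto simp: edges_def card_insert_if)
    finally show ?thesis by simp
  qed
  have s1: "(\<Sum>F\<in>faces M. face_curv M F) = (\<Sum>d\<in>ID. ang d) - pi * real (card ID) + 2 * pi * real (card (faces M))"
  proof -
    have "(\<Sum>F\<in>faces M. face_curv M F) = (\<Sum>F\<in>faces M. \<Sum>d\<in>F. ang d) - pi * (\<Sum>F\<in>faces M. real (card F)) + 2 * pi * real (card (faces M))"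
      unfolding face_curv_def fdeg_def ang_def
      by (simp add: sum_subtractf sum.distrib sum_distrib_left algebra_simps)
    also have "(\<Sum>F\<in>faces M. real (card F)) = real (card ID)"
      using cF by (metis of_nat_sum)
    finally show ?thesis using aF by simp
  qed
  have s2: "(\<Sum>v\<in>vertices M. vertex_curv M v) = 2 * pi * real (card (vertices M)) - pi * real (card Ou) - (\<Sum>d\<in>ID. ang d)"
  proof -
    have "(\<Sum>v\<in>vertices M. vertex_curv M v) = 2 * pi * real (card (vertices M)) - pi * (\<Sum>v\<in>vertices M. real (mu M v)) - (\<Sum>v\<in>vertices M. vertex_angle_sum M v)"
      unfolding vertex_curv_def
      by (simp add: sum_subtractf sum.distrib sum_distrib_left algebra_simps)
    also have "(\<Sum>v\<in>vertices M. real (mu M v)) = real (card Ou)"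
      using mV by (metis of_nat_sum)
    finally show ?thesis using aV by simp
  qed
  have "real (card ID) + real (card Ou) = real (card D)" using arg_cong[OF cardD, of real] by simp
  moreover have "real (card (faces M)) + 1 = real (card (all_faces M))" using arg_cong[OF cfaces, of real] by simp
  moreover have "real (card (vertices M)) + real (card (all_faces M)) = real (card (edges M)) + 2"
    using arg_cong[OF euler, of real] by simp
  moreover have "real (card D) \<le> 2 * real (card (edges M))" using E2 of_nat_le_iff[of "card D" "2 * card (edges M)", where 'a=real] by simp
  ultimately have lin: "0 \<le> 2 * real (card (vertices M)) + 2 * real (card (faces M)) - real (card ID) - real (card Ou)"
    by linarith
  from lin have "0 \<le> pi * (2 * real (card (vertices M)) + 2 * real (card (faces M)) - real (card ID) - real (card Ou))"
    by simp
  then show ?thesis unfolding s1 s2 aux_gb .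
qed



lemma nonflat_bound:
  assumes dm: "delta_b_map \<delta> b M" and dpos: "\<delta> > 0"
  shows "\<delta> * (real (card {v\<in>vertices M. mu M v = 0 \<and> vertex_curv M v \<noteq> 0}) + real (card {F\<in>faces M. face_curv M F \<noteq> 0}))
         \<le> pi * real (perimeter M)"
proof -
  have im: "is_map M" using dm unfolding delta_b_map_def by simp
  note mb = map_basic[OF im]
  let ?NV = "{v\<in>vertices M. mu M v = 0 \<and> vertex_curv M v \<noteq> 0}"
  let ?NF = "{F\<in>faces M. face_curv M F \<noteq> 0}"
  let ?BV = "{v\<in>vertices M. mu M v > 0}"
  have finF: "finite (faces M)" using mb(6) unfolding faces_def by simp
  have fc: "face_curv M F \<le> (if face_curv M F \<noteq> 0 then - \<delta> else 0)" if "F \<in> faces M" for F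
    using dm that unfolding delta_b_map_def by auto
  have "(\<Sum>F\<in>faces M. face_curv M F) \<le> (\<Sum>F\<in>faces M. (if face_curv M F \<noteq> 0 then - \<delta> else 0))"
    by (intro sum_mono fc)
  also have "\<dots> = (\<Sum>F\<in>?NF. - \<delta>)"
    using sum.inter_filter[OF finF, of "\<lambda>_. - \<delta>" "\<lambda>F. face_curv M F \<noteq> 0"] by simp
  finally have S1: "(\<Sum>F\<in>faces M. face_curv M F) \<le> - \<delta> * real (card ?NF)" by (simp add: mult.commute)
  have angnn: "cm_angle M d \<ge> 0" if "d \<in> \<Union>(faces M)" for d
    using im that unfolding is_map_def by blast
  have vas: "vertex_angle_sum M v \<ge> 0" for v
    unfolding vertex_angle_sum_def by (rule sum_nonneg) (use angnn in blast)
  define h where "h v = (if mu M v > 0 then pi else 0) + (if mu M v = 0 \<and> vertex_curv M v \<noteq> 0 then - \<delta> else 0)" for v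
  have vc: "vertex_curv M v \<le> h v" if "v \<in> vertices M" for v
  proof (cases "mu M v > 0")
    case True
    then have "real (mu M v) \<ge> 1" by simp
    then have "(2 - real (mu M v)) * pi \<le> pi" using pi_gt_zero by (simp add: algebra_simps)
    then have "vertex_curv M v \<le> pi" using vas[of v] unfolding vertex_curv_def by linarith
    then show ?thesis using True unfolding h_def by simp
  next
    case False
    then have "interior_vertex M v" using that unfolding interior_vertex_def by simp
    then show ?thesis using dm False unfolding h_def delta_b_map_def by auto
  qed
  have "(\<Sum>v\<in>vertices M. vertex_curv M v) \<le> (\<Sum>v\<in>vertices M. h v)"
    by (intro sum_mono vc)
  also have "\<dots> = (\<Sum>v\<in>vertices M. (if mu M v > 0 then pi else 0)) + (\<Sum>v\<in>vertices M. (if mu M v = 0 \<and> vertex_curv M v \<noteq> 0 then - \<delta> else 0))"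
    unfolding h_def by (rule sum.distrib)
  also have "(\<Sum>v\<in>vertices M. (if mu M v > 0 then pi else 0)) = (\<Sum>v\<in>?BV. pi)"
    using sum.inter_filter[OF mb(7), of "\<lambda>_. pi" "\<lambda>v. mu M v > 0"] by simp
  also have "(\<Sum>v\<in>vertices M. (if mu M v = 0 \<and> vertex_curv M v \<noteq> 0 then - \<delta> else 0)) = (\<Sum>v\<in>?NV. - \<delta>)"
    using sum.inter_filter[OF mb(7), of "\<lambda>_. - \<delta>" "\<lambda>v. mu M v = 0 \<and> vertex_curv M v \<noteq> 0"] by simp
  finally have S2: "(\<Sum>v\<in>vertices M. vertex_curv M v) \<le> pi * real (card ?BV) - \<delta> * real (card ?NV)"
    by (simp add: mult.commute)
  have "?BV \<subseteq> tgt M ` cm_outer M"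
  proof
    fix v assume "v \<in> ?BV"
    then have "card {d \<in> cm_outer M. tgt M d = v} > 0" unfolding mu_def by simp
    then obtain d where "d \<in> cm_outer M" "tgt M d = v" by (metis (mono_tags, lifting) card_gt_0_iff empty_Collect_eq)
    then show "v \<in> tgt M ` cm_outer M" by blast
  qed
  moreover have "finite (cm_outer M)" using mb(10)[OF mb(13)] by blast
  ultimately have "card ?BV \<le> card (cm_outer M)"
    by (meson card_image_le card_mono finite_imageI le_trans)
  then have "real (card ?BV) \<le> real (perimeter M)" unfolding perimeter_def by simp
  then have "pi * real (card ?BV) \<le> pi * real (perimeter M)" by simp
  with S1 S2 gb_total[OF im] show ?thesis by (simp only: distrib_left)
qed



lemma main_bound:
  fixes \<delta> :: real and b :: nat and r :: nat and M :: cmap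
  assumes "\<delta> > 0" and "b > 0"
  and H: "delta_b_map \<delta> b M \<and>
           (\<forall>v\<in>vertices M. \<exists>w\<in>vertices M. dist_le M r v w \<and> special_vertex M w)"
  shows "real (area M) \<le> real b * (1 + real b * pi / \<delta>) * (2 * real b) ^ r * real (perimeter M)"
proof -
  have dm: "delta_b_map \<delta> b M" using H by simp
  have im: "is_map M" using dm unfolding delta_b_map_def by simp
  note mb = map_basic[OF im]
  have vdb: "\<forall>v\<in>vertices M. vdeg M v \<le> b" using dm unfolding delta_b_map_def by simp
  have fdb: "\<forall>F\<in>faces M. card F \<le> b" using dm unfolding delta_b_map_def fdeg_def by simp
  define n where "n = perimeter M"
  define NV where "NV = {v\<in>vertices M. mu M v = 0 \<and> vertex_curv M v \<noteq> 0}"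
  define NF where "NF = {F\<in>faces M. face_curv M F \<noteq> 0}"
  define BV where "BV = {v\<in>vertices M. mu M v > 0}"
  define S where "S = {w\<in>vertices M. special_vertex M w}"
  have nb: "\<delta> * (real (card NV) + real (card NF)) \<le> pi * real n"
    using nonflat_bound[OF dm assms(1)] unfolding NV_def NF_def n_def .
  have finF: "finite (faces M)" using mb(6) unfolding faces_def by simp
  have finNF: "finite NF" using finF unfolding NF_def by simp
  have "BV \<subseteq> tgt M ` cm_outer M"
  proof
    fix v assume "v \<in> BV"
    then have "card {d \<in> cm_outer M. tgt M d = v} > 0" unfolding mu_def BV_def by simp
    then obtain d where "d \<in> cm_outer M" "tgt M d = v" by (metis (mono_tags, lifting) card_gt_0_iff empty_Collect_eq)
    then show "v \<in> tgt M ` cm_outer M" by blast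
  qed
  moreover have "finite (cm_outer M)" using mb(10)[OF mb(13)] by blast
  ultimately have cBV: "card BV \<le> n"
    unfolding n_def perimeter_def by (meson card_image_le card_mono finite_imageI le_trans)
  have Ssub: "S \<subseteq> BV \<union> NV \<union> (\<Union>F\<in>NF. src M ` F)"
  proof
    fix w assume "w \<in> S"
    then have wV: "w \<in> vertices M" and sp: "special_vertex M w" unfolding S_def by auto
    show "w \<in> BV \<union> NV \<union> (\<Union>F\<in>NF. src M ` F)"
      using sp wV unfolding special_vertex_def boundary_vertex_def interior_vertex_def BV_def NV_def NF_def
      by auto
  qed
  have cU: "card (\<Union>F\<in>NF. src M ` F) \<le> b * card NF"
  proof -
    have "card (\<Union>F\<in>NF. src M ` F) \<le> (\<Sum>F\<in>NF. card (src M ` F))" using finNF by (rule card_UN_le)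
    also have "\<dots> \<le> (\<Sum>F\<in>NF. b)"
    proof (intro sum_mono)
      fix F assume "F \<in> NF"
      then have "F \<in> faces M" unfolding NF_def by simp
      then have "card F \<le> b" "finite F" using fdb mb(10) unfolding faces_def by auto
      then show "card (src M ` F) \<le> b" using card_image_le le_trans by blast
    qed
    finally show ?thesis by (simp add: mult.commute)
  qed
  have cS: "card S \<le> n + card NV + b * card NF"
  proof -
    have "card S \<le> card (BV \<union> NV \<union> (\<Union>F\<in>NF. src M ` F))"
    proof (rule card_mono[OF _ Ssub])
      have "finite (src M ` \<Union>NF)" using mb(1) finite_subset mb(10) unfolding NF_def faces_def
        by (metis (no_types, lifting) Union_least finite_imageI mem_Collect_eq DiffD1)
      moreover have "(\<Union>F\<in>NF. src M ` F) = src M ` \<Union>NF" by auto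
      ultimately show "finite (BV \<union> NV \<union> (\<Union>F\<in>NF. src M ` F))"
        using mb(7) unfolding BV_def NV_def by simp
    qed
    also have "\<dots> \<le> card BV + card NV + card (\<Union>F\<in>NF. src M ` F)"
      by (meson card_Un_le add_le_mono le_trans order_refl)
    finally show ?thesis using cBV cU by linarith
  qed
  define ball where "ball w = (\<Union>k\<in>{..r}. {v. (v, w) \<in> adj M ^^ k})" for w
  have cball: "card (ball w) \<le> (2 * b) ^ r" for w
  proof -
    have "card (ball w) \<le> (\<Sum>k\<in>{..r}. card {v. (v, w) \<in> adj M ^^ k})"
      unfolding ball_def by (rule card_UN_le) simp
    also have "\<dots> \<le> (\<Sum>k\<in>{..r}. b ^ r)"
    proof (intro sum_mono)
      fix k assume "k \<in> {..r}"
      then have "b ^ k \<le> b ^ r" using assms(2) by (intro power_increasing) auto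
      then show "card {v. (v, w) \<in> adj M ^^ k} \<le> b ^ r" using ball_card[OF im vdb, of w k] by linarith
    qed
    also have "\<dots> = (r + 1) * b ^ r" by simp
    also have "\<dots> \<le> 2 ^ r * b ^ r" using less_exp[of r] by (intro mult_le_mono1) (simp add: Suc_le_eq)
    also have "\<dots> = (2 * b) ^ r" by (simp add: power_mult_distrib)
    finally show ?thesis .
  qed
  have Vsub: "vertices M \<subseteq> (\<Union>w\<in>S. ball w)"
  proof
    fix v assume "v \<in> vertices M"
    then obtain w where "w \<in> vertices M" "dist_le M r v w" "special_vertex M w" using H by blast
    then show "v \<in> (\<Union>w\<in>S. ball w)" unfolding S_def ball_def dist_le_def by auto
  qed
  have finS: "finite S" using mb(7) unfolding S_def by simp
  have cV: "card (vertices M) \<le> card S * (2 * b) ^ r"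
  proof -
    have "card (vertices M) \<le> card (\<Union>w\<in>S. ball w)"
    proof (rule card_mono[OF _ Vsub])
      have "(\<Union>w\<in>S. ball w) \<subseteq> src M ` cm_darts M \<union> S"
      proof
        fix v assume "v \<in> (\<Union>w\<in>S. ball w)"
        then obtain w k where w: "w \<in> S" "(v, w) \<in> adj M ^^ k" unfolding ball_def by auto
        show "v \<in> src M ` cm_darts M \<union> S"
        proof (cases k)
          case 0 then show ?thesis using w by simp
        next
          case (Suc k')
          then obtain u where "(v, u) \<in> adj M" using w(2) relpow_Suc_D2 by metis
          then show ?thesis unfolding adj_def by auto
        qed
      qed
      then show "finite (\<Union>w\<in>S. ball w)" using mb(1) finS finite_subset by blast
    qed
    also have "\<dots> \<le> (\<Sum>w\<in>S. card (ball w))" using finS by (rule card_UN_le)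
    also have "\<dots> \<le> (\<Sum>w\<in>S. (2 * b) ^ r)" by (intro sum_mono cball)
    finally show ?thesis by simp
  qed
  have cD: "card (cm_darts M) \<le> b * card (vertices M)"
  proof -
    have "cm_darts M = (\<Union>v\<in>vertices M. {d \<in> cm_darts M. src M d = v})" unfolding mb(8) by auto
    then have "card (cm_darts M) \<le> (\<Sum>v\<in>vertices M. card {d \<in> cm_darts M. src M d = v})"
      using card_UN_le[OF mb(7)] by metis
    also have "\<dots> \<le> (\<Sum>v\<in>vertices M. b)" using vdb unfolding vdeg_def by (intro sum_mono) auto
    finally show ?thesis by (simp add: mult.commute)
  qed
  have cA: "area M \<le> card (cm_darts M)"
  proof -
    have "area M \<le> card (all_faces M)" unfolding area_def faces_def using mb(6) by (intro card_mono) auto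
    also have "\<dots> \<le> card (cm_darts M)" unfolding mb(5) using mb(1) by (rule card_image_le)
    finally show ?thesis .
  qed
  have nat_bound: "area M \<le> b * (2 * b) ^ r * card S"
  proof -
    have "area M \<le> b * card (vertices M)" using cA cD by linarith
    also have "\<dots> \<le> b * (card S * (2 * b) ^ r)" using cV by (intro mult_le_mono2)
    finally show ?thesis by (simp add: algebra_simps)
  qed
  have rS: "real (card S) \<le> real n * (1 + real b * pi / \<delta>)"
  proof -
    have b1: "real b \<ge> 1" using assms(2) by simp
    have "real (card S) \<le> real n + real (card NV) + real b * real (card NF)"
      using cS by (metis of_nat_add of_nat_le_iff of_nat_mult)
    also have "\<dots> \<le> real n + real b * (real (card NV) + real (card NF))"
    proof -
      have "real (card NV) \<le> real b * real (card NV)" using b1 mult_right_mono[OF b1, of "real (card NV)"] by simp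
      then show ?thesis by (simp add: algebra_simps)
    qed
    also have "real (card NV) + real (card NF) \<le> pi * real n / \<delta>"
      using nb assms(1) by (simp add: field_simps mult.commute)
    then have "real n + real b * (real (card NV) + real (card NF)) \<le> real n + real b * (pi * real n / \<delta>)"
      using mult_left_mono[of _ _ "real b"] by fastforce
    also have "\<dots> = real n * (1 + real b * pi / \<delta>)" by (simp add: algebra_simps)
    finally show ?thesis .
  qed
  have "real (area M) \<le> real b * (2 * real b) ^ r * real (card S)"
    using nat_bound by (metis of_nat_le_iff of_nat_mult of_nat_power of_nat_numeral)
  also have "\<dots> \<le> real b * (2 * real b) ^ r * (real n * (1 + real b * pi / \<delta>))"
    using rS by (intro mult_left_mono) auto
  also have "\<dots> = real b * (1 + real b * pi / \<delta>) * (2 * real b) ^ r * real (perimeter M)"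
    unfolding n_def by (simp add: algebra_simps)
  finally show ?thesis by simp
qed


theorem theorem1p5:
  fixes \<delta> :: real and b :: nat
  assumes "\<delta> > 0" and "b > 0"
  shows "\<exists>A B :: real. \<forall>(r::nat) (M::cmap).
           delta_b_map \<delta> b M \<and>
           (\<forall>v\<in>vertices M. \<exists>w\<in>vertices M. dist_le M r v w \<and> special_vertex M w)
           \<longrightarrow> real (area M) \<le> A * B ^ r * real (perimeter M)"
  using main_bound[OF assms] by blast


end
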